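(* Let $n\ge1$ and let $(\xi_i,\mathcal{F}_i)_{i=0,\dots,n}$ be a sequence of real-valued martingale differences on $(\Omega,\mathcal{F},\mathbf{P})$ with $\xi_0=0$, $\{\emptyset,\Omega\}=\mathcal{F}_0\subseteq\cdots\subseteq\mathcal{F}_n\subseteq\mathcal{F}$ and $\mathbf{E}[\xi_i\mid\mathcal{F}_{i-1}]=0$. Let $S_k=\sum_{i=1}^k\xi_i$ and $\langle S\rangle_k=\sum_{i=1}^k\mathbf{E}[\xi_i^2\mid\mathcal{F}_{i-1}]$. Let $p\ge2$ and $\delta>0$, and assume $\mathbf{E}[|\xi_i|^{p+\delta}]<\infty$ for all $i\in[1,n]$. Then for all $x,v>0$, $$\mathbf{P}\big(S_k\ge x\text{ and }\langle S\rangle_k\le v^2\text{ for some }k\in[1,n]\big)\le\exp\Bigg\{-\frac{x^2}{2\big(v^2+\frac13x^{(2p+\delta)/(p+\delta)}\big)}\Bigg\}+\frac{1}{x^p}\sum_{i=1}^n\mathbf{E}\Big[|\xi_i|^{p+\delta}\mathbf{1}_{\{\xi_i>x^{p/(p+\delta)}\}}\Big].$$ *)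

theory Defs
  imports "HOL-Probability.Probability"
begin

definition mart_sum :: "(nat \<Rightarrow> 'a \<Rightarrow> real) \<Rightarrow> nat \<Rightarrow> 'a \<Rightarrow> real" where
  "mart_sum \<xi> k \<omega> = (\<Sum>i=1..k. \<xi> i \<omega>)"

definition cond_var_sum :: "'a measure \<Rightarrow> (nat \<Rightarrow> 'a measure) \<Rightarrow> (nat \<Rightarrow> 'a \<Rightarrow> real) \<Rightarrow> nat \<Rightarrow> 'a \<Rightarrow> real" where
  "cond_var_sum M F \<xi> k \<omega> = (\<Sum>i=1..k. real_cond_exp M (F (i - 1)) (\<lambda>w. (\<xi> i w)\<^sup>2) \<omega>)"

end

theory Submission
  imports Defs
begin


lemma fact_ge_pow3: "2 * 3 ^ n \<le> (fact (n+2) :: real)"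
proof (induction n)
  case 0 then show ?case by simp
next
  case (Suc n)
  have "fact (Suc n + 2) = real (n+3) * (fact (n+2) :: real)"
    by (simp add: algebra_simps)
  moreover have "real (n+3) * fact (n+2) \<ge> 3 * (2 * 3^n)"
    using Suc by (intro mult_mono) auto
  moreover have "2*3^Suc n = 3*(2*3^n::real)" by simp
  ultimately show ?case by linarith
qed

lemma exp_pos_bound:
  fixes s :: real assumes "0 \<le> s" "s < 3"
  shows "exp s \<le> 1 + s + s\<^sup>2 / (2 * (1 - s/3))"
proof -
  have sm: "summable (\<lambda>n. inverse (fact (n + 2)) * s ^ (n + 2))"
    using summable_ignore_initial_segment[OF summable_exp_generic[of s], of 2] by simp
  have g: "summable (\<lambda>n. s\<^sup>2/2 * (s/3)^n)"
    using assms by (intro summable_mult summable_geometric) auto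
  have le: "inverse (fact (n + 2)) * s ^ (n + 2) \<le> s\<^sup>2/2 * (s/3)^n" for n
  proof -
    have "inverse (fact (n + 2)) * s ^ (n + 2) = s\<^sup>2 * s^n / fact (n+2)"
      by (simp add: power_add divide_inverse ac_simps power2_eq_square)
    also have "\<dots> \<le> s\<^sup>2 * s^n / (2 * 3^n)"
      using fact_ge_pow3[of n] assms by (intro divide_left_mono) auto
    also have "\<dots> = s\<^sup>2/2 * (s/3)^n" by (simp add: power_divide)
    finally show ?thesis .
  qed
  have "(\<Sum>n. inverse (fact (n + 2)) * s ^ (n + 2)) \<le> (\<Sum>n. s\<^sup>2/2 * (s/3)^n)"
    by (rule suminf_le[OF le sm g])
  also have "\<dots> = s\<^sup>2/2 * (1 / (1 - s/3))"
    using assms by (subst suminf_mult) (auto simp: suminf_geometric)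
  also have "\<dots> = s\<^sup>2 / (2 * (1 - s/3))" by simp
  finally show ?thesis using exp_first_two_terms[of s] by simp
qed

lemma exp_neg_bound:
  fixes s :: real assumes "s \<le> 0"
  shows "exp s \<le> 1 + s + s\<^sup>2 / 2"
proof -
  let ?f = "\<lambda>t. 1 + t + t\<^sup>2/2 - exp t"
  have "?f 0 \<le> ?f s"
  proof (rule DERIV_nonpos_imp_nonincreasing[OF assms])
    fix t assume t: "s \<le> t" "t \<le> 0"
    have "DERIV ?f t :> 1 + t - exp t"
      by (auto intro!: derivative_eq_intros)
    moreover have "1 + t - exp t \<le> 0" using exp_ge_add_one_self[of t] by simp
    ultimately show "\<exists>y. DERIV ?f t :> y \<and> y \<le> 0" by blast
  qed
  then show ?thesis by simp
qed

lemma exp_bern: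
  fixes s a :: real assumes "s \<le> a" "0 \<le> a" "a < 3"
  shows "exp s \<le> 1 + s + s\<^sup>2 / (2 * (1 - a/3))"
proof (cases "s \<le> 0")
  case True
  have h: "s\<^sup>2 / 2 \<le> s\<^sup>2 / (2 * (1 - a/3))"
    using assms by (intro divide_left_mono) auto
  show ?thesis using exp_neg_bound[OF True] h by linarith
next
  case False
  have "s\<^sup>2 / (2 * (1 - s/3)) \<le> s\<^sup>2 / (2 * (1 - a/3))"
    using assms False by (intro divide_left_mono) (auto intro!: mult_pos_pos)
  then show ?thesis using exp_pos_bound[of s] assms False by simp
qed



lemma sup_step:
  fixes M G :: "'a measure" and X Y :: "'a \<Rightarrow> real"
  assumes M: "prob_space M" and G: "subalgebra M G"
    and Xm[measurable]: "X \<in> borel_measurable M" and X2: "integrable M (\<lambda>w. (X w)\<^sup>2)"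
    and Xi: "integrable M X"
    and mds: "AE \<omega> in M. real_cond_exp M G X \<omega> = 0"
    and Ym[measurable]: "Y \<in> borel_measurable G" and Ypos: "\<And>\<omega>. 0 \<le> Y \<omega>"
    and Yb: "AE \<omega> in M. Y \<omega> \<le> C"
    and l: "0 < l" "0 < y" "l*y < 3"
  shows "(\<integral>\<omega>. Y \<omega> * exp (l * min (X \<omega>) y - l\<^sup>2 / (2*(1 - l*y/3)) * real_cond_exp M G (\<lambda>w. (X w)\<^sup>2) \<omega>) \<partial>M)
         \<le> (\<integral>\<omega>. Y \<omega> \<partial>M)"
proof -
  interpret prob_space M by (rule M)
  interpret finite_measure_subalgebra M G by unfold_locales (rule G)
  define gg where "gg = l\<^sup>2 / (2*(1 - l*y/3))"
  define Q where "Q = real_cond_exp M G (\<lambda>w. (X w)\<^sup>2)"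
  define Y' where "Y' = (\<lambda>\<omega>. Y \<omega> * exp (- gg * Q \<omega>))"
  define m where "m = (\<lambda>\<omega>. min (X \<omega>) y)"
  have gg: "0 \<le> gg" unfolding gg_def using l by auto
  have Qm[measurable]: "Q \<in> borel_measurable G" "Q \<in> borel_measurable M" unfolding Q_def by auto
  have YM[measurable]: "Y \<in> borel_measurable M" by (rule measurable_from_subalg[OF G Ym])
  have Y'G[measurable]: "Y' \<in> borel_measurable G" unfolding Y'_def by measurable
  have Y'M[measurable]: "Y' \<in> borel_measurable M" by (rule measurable_from_subalg[OF G Y'G])
  have mM[measurable]: "m \<in> borel_measurable M" unfolding m_def by measurable
  have Qpos: "AE \<omega> in M. 0 \<le> Q \<omega>" unfolding Q_def by (intro real_cond_exp_pos) auto
  have Y'pos: "\<And>\<omega>. 0 \<le> Y' \<omega>" unfolding Y'_def using Ypos by auto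
  have Y'b: "AE \<omega> in M. Y' \<omega> \<le> C"
    using Qpos Yb
  proof eventually_elim
    case (elim \<omega>)
    have "exp (- gg * Q \<omega>) \<le> 1" using gg elim by (simp add: mult_nonneg_nonneg)
    then have "Y' \<omega> \<le> Y \<omega>" unfolding Y'_def using Ypos[of \<omega>] by (simp add: mult_left_le)
    then show ?case using elim by simp
  qed
  have Y'n: "AE \<omega> in M. norm (Y' \<omega>) \<le> C" using Y'b Y'pos by auto
  have mabs: "\<bar>m \<omega>\<bar> \<le> \<bar>X \<omega>\<bar>" for \<omega> unfolding m_def using l by auto
  have msq: "(m \<omega>)\<^sup>2 \<le> (X \<omega>)\<^sup>2" for \<omega> using mabs[of \<omega>]
    by (metis abs_ge_zero power2_abs power_mono)
  have mle: "m \<omega> \<le> X \<omega>" "m \<omega> \<le> y" for \<omega> unfolding m_def by auto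
  have bnd: "integrable M (\<lambda>\<omega>. Y' \<omega> * f \<omega>)" if fi: "integrable M g" and [measurable]: "f \<in> borel_measurable M"
    and fg: "\<And>\<omega>. \<bar>f \<omega>\<bar> \<le> \<bar>g \<omega>\<bar>" for f g :: "'a \<Rightarrow> real"
  proof (rule Bochner_Integration.integrable_bound[where f="\<lambda>\<omega>. C * g \<omega>"])
    show "integrable M (\<lambda>\<omega>. C * g \<omega>)" using fi by auto
    show "AE \<omega> in M. norm (Y' \<omega> * f \<omega>) \<le> norm (C * g \<omega>)"
      using Y'b
    proof eventually_elim
      case (elim \<omega>)
      have "\<bar>Y' \<omega> * f \<omega>\<bar> = Y' \<omega> * \<bar>f \<omega>\<bar>" using Y'pos[of \<omega>] by (simp add: abs_mult)
      also have "\<dots> \<le> C * \<bar>g \<omega>\<bar>" using elim Y'pos[of \<omega>] fg[of \<omega>]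
        by (intro mult_mono) auto
      also have "\<dots> \<le> \<bar>C * g \<omega>\<bar>" by (simp add: abs_mult mult_right_mono)
      finally show ?case by simp
    qed
  qed measurable
  have Qi: "integrable M Q" unfolding Q_def using X2 by auto
  have i_Y': "integrable M Y'" by (rule integrable_const_bound[OF Y'n]) auto
  have i_Y: "integrable M Y" by (rule integrable_const_bound[of _ C]) (use Yb Ypos in auto)
  have i_m: "integrable M (\<lambda>\<omega>. Y' \<omega> * m \<omega>)" by (rule bnd[OF Xi]) (auto simp: mabs)
  have i_X: "integrable M (\<lambda>\<omega>. Y' \<omega> * X \<omega>)" by (rule bnd[OF Xi]) auto
  have i_m2: "integrable M (\<lambda>\<omega>. Y' \<omega> * (m \<omega>)\<^sup>2)" by (rule bnd[OF X2]) (auto simp: msq)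
  have i_X2: "integrable M (\<lambda>\<omega>. Y' \<omega> * (X \<omega>)\<^sup>2)" by (rule bnd[OF X2]) auto
  have i_Q: "integrable M (\<lambda>\<omega>. Y' \<omega> * Q \<omega>)" by (rule bnd[OF Qi]) auto
  have i_e: "integrable M (\<lambda>\<omega>. Y' \<omega> * exp (l * m \<omega>))"
  proof (rule integrable_const_bound[where B="C * exp (l*y)"])
    show "AE \<omega> in M. norm (Y' \<omega> * exp (l * m \<omega>)) \<le> C * exp (l * y)"
      using Y'b
    proof eventually_elim
      case (elim \<omega>)
      have "exp (l * m \<omega>) \<le> exp (l*y)" using mle(2)[of \<omega>] l by (simp add: mult_left_mono)
      then show ?case using elim Y'pos[of \<omega>] by (simp add: abs_mult mult_mono)
    qed
  qed measurable
  have "(\<integral>\<omega>. Y \<omega> * exp (l * min (X \<omega>) y - gg * Q \<omega>) \<partial>M) = (\<integral>\<omega>. Y' \<omega> * exp (l * m \<omega>) \<partial>M)"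
    unfolding Y'_def m_def by (simp add: exp_diff exp_minus field_simps)
  also have "\<dots> \<le> (\<integral>\<omega>. Y' \<omega> + l * (Y' \<omega> * m \<omega>) + gg * (Y' \<omega> * (m \<omega>)\<^sup>2) \<partial>M)"
  proof (rule integral_mono[OF i_e])
    show "integrable M (\<lambda>\<omega>. Y' \<omega> + l * (Y' \<omega> * m \<omega>) + gg * (Y' \<omega> * (m \<omega>)\<^sup>2))"
      using i_Y' i_m i_m2 by auto
    fix \<omega>
    have "exp (l * m \<omega>) \<le> 1 + l * m \<omega> + (l * m \<omega>)\<^sup>2 / (2 * (1 - l*y/3))"
      using l mle(2)[of \<omega>] by (intro exp_bern) (auto simp: mult_left_mono)
    also have "\<dots> = 1 + l * m \<omega> + gg * (m \<omega>)\<^sup>2" unfolding gg_def by (simp add: power_mult_distrib)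
    finally have "Y' \<omega> * exp (l * m \<omega>) \<le> Y' \<omega> * (1 + l * m \<omega> + gg * (m \<omega>)\<^sup>2)"
      using Y'pos[of \<omega>] by (rule mult_left_mono)
    then show "Y' \<omega> * exp (l * m \<omega>) \<le> Y' \<omega> + l * (Y' \<omega> * m \<omega>) + gg * (Y' \<omega> * (m \<omega>)\<^sup>2)"
      by (simp add: algebra_simps)
  qed
  also have "\<dots> = (\<integral>\<omega>. Y' \<omega> \<partial>M) + l * (\<integral>\<omega>. Y' \<omega> * m \<omega> \<partial>M) + gg * (\<integral>\<omega>. Y' \<omega> * (m \<omega>)\<^sup>2 \<partial>M)"
    using i_Y' i_m i_m2 by simp
  also have "\<dots> \<le> (\<integral>\<omega>. Y' \<omega> \<partial>M) + l * (\<integral>\<omega>. Y' \<omega> * X \<omega> \<partial>M) + gg * (\<integral>\<omega>. Y' \<omega> * (X \<omega>)\<^sup>2 \<partial>M)"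
  proof -
    have "(\<integral>\<omega>. Y' \<omega> * m \<omega> \<partial>M) \<le> (\<integral>\<omega>. Y' \<omega> * X \<omega> \<partial>M)"
      using i_m i_X by (rule integral_mono) (use Y'pos mle in \<open>auto intro: mult_left_mono\<close>)
    moreover have "(\<integral>\<omega>. Y' \<omega> * (m \<omega>)\<^sup>2 \<partial>M) \<le> (\<integral>\<omega>. Y' \<omega> * (X \<omega>)\<^sup>2 \<partial>M)"
      using i_m2 i_X2 by (rule integral_mono) (use Y'pos msq in \<open>auto intro: mult_left_mono\<close>)
    ultimately show ?thesis using l gg by (intro add_mono mult_left_mono) auto
  qed
  also have "(\<integral>\<omega>. Y' \<omega> * X \<omega> \<partial>M) = 0"
  proof -
    have "(\<integral>\<omega>. Y' \<omega> * X \<omega> \<partial>M) = (\<integral>\<omega>. Y' \<omega> * real_cond_exp M G X \<omega> \<partial>M)"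
      by (rule real_cond_exp_intg(2)[symmetric]) (use i_X in auto)
    also have "\<dots> = (\<integral>\<omega>. 0 \<partial>M)"
      by (rule integral_cong_AE) (use mds in auto)
    finally show ?thesis by simp
  qed
  also have "(\<integral>\<omega>. Y' \<omega> * (X \<omega>)\<^sup>2 \<partial>M) = (\<integral>\<omega>. Y' \<omega> * Q \<omega> \<partial>M)"
    unfolding Q_def by (rule real_cond_exp_intg(2)[symmetric]) (use i_X2 in auto)
  also have "(\<integral>\<omega>. Y' \<omega> \<partial>M) + l * 0 + gg * (\<integral>\<omega>. Y' \<omega> * Q \<omega> \<partial>M)
      = (\<integral>\<omega>. Y' \<omega> * (1 + gg * Q \<omega>) \<partial>M)"
    using i_Y' i_Q by (simp add: algebra_simps)
  also have "\<dots> \<le> (\<integral>\<omega>. Y \<omega> \<partial>M)"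
  proof (rule integral_mono[OF _ i_Y])
    show "integrable M (\<lambda>\<omega>. Y' \<omega> * (1 + gg * Q \<omega>))"
      using i_Y' i_Q by (simp add: algebra_simps)
    fix \<omega>
    have "Y' \<omega> * (1 + gg * Q \<omega>) \<le> Y' \<omega> * exp (gg * Q \<omega>)"
      using Y'pos[of \<omega>] by (intro mult_left_mono) auto
    also have "\<dots> = Y \<omega>" unfolding Y'_def by (simp add: exp_minus field_simps)
    finally show "Y' \<omega> * (1 + gg * Q \<omega>) \<le> Y \<omega>" .
  qed
  finally show ?thesis unfolding gg_def Q_def .
qed



lemma maximal_ineq:
  fixes M :: "'a measure" and F :: "nat \<Rightarrow> 'a measure" and Z D :: "nat \<Rightarrow> 'a \<Rightarrow> real"
  assumes M: "prob_space M"
    and Fsub: "\<And>k. k \<le> n \<Longrightarrow> subalgebra M (F k)"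
    and Zm: "\<And>j k. j \<le> k \<Longrightarrow> k \<le> n \<Longrightarrow> Z j \<in> borel_measurable (F k)"
    and Z0: "\<And>\<omega>. Z 0 \<omega> = 1"
    and Zpos: "\<And>k \<omega>. 0 \<le> Z k \<omega>"
    and Zb: "\<And>k. k \<le> n \<Longrightarrow> \<exists>B. AE \<omega> in M. Z k \<omega> \<le> B"
    and ZD: "\<And>k \<omega>. Z (Suc k) \<omega> = Z k \<omega> * D (Suc k) \<omega>"
    and step: "\<And>k Y C. k < n \<Longrightarrow> Y \<in> borel_measurable (F k) \<Longrightarrow> (\<And>\<omega>. 0 \<le> Y \<omega>)
        \<Longrightarrow> AE \<omega> in M. Y \<omega> \<le> C \<Longrightarrow> (\<integral>\<omega>. Y \<omega> * D (Suc k) \<omega> \<partial>M) \<le> (\<integral>\<omega>. Y \<omega> \<partial>M)"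
    and c: "0 < c"
  shows "c * measure M {\<omega> \<in> space M. \<exists>j\<in>{1..n}. Z j \<omega> \<ge> c} \<le> 1"
proof -
  interpret prob_space M by (rule M)
  define N where "N k \<omega> = (if \<forall>j\<in>{1..k}. Z j \<omega> < c then 1 else 0 :: real)" for k \<omega>
  have N01: "0 \<le> N k \<omega>" "N k \<omega> \<le> 1" for k \<omega> unfolding N_def by auto
  have NF: "N k \<in> borel_measurable (F k)" if "k \<le> n" for k
  proof -
    have "Measurable.pred (F k) (\<lambda>\<omega>. \<forall>j\<in>{1..k}. Z j \<omega> < c)"
    proof (rule pred_intros_finite(3)[where P="\<lambda>\<omega> j. Z j \<omega> < c"])
      fix j assume "j \<in> {1..k}"
      then have [measurable]: "Z j \<in> borel_measurable (F k)" using Zm that by auto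
      show "Measurable.pred (F k) (\<lambda>\<omega>. Z j \<omega> < c)" by measurable
    qed simp
    then show ?thesis unfolding N_def by (intro measurable_If) auto
  qed
  have ZM: "Z k \<in> borel_measurable M" if "k \<le> n" for k
    using measurable_from_subalg[OF Fsub[OF that] Zm[OF order_refl that]] .
  have NM: "N k \<in> borel_measurable M" if "k \<le> n" for k
    using measurable_from_subalg[OF Fsub[OF that] NF[OF that]] .
  have bint: "integrable M f" if "f \<in> borel_measurable M" "AE \<omega> in M. \<bar>f \<omega>\<bar> \<le> B" for f :: "'a \<Rightarrow> real" and B :: real
    using that by (intro integrable_const_bound[where B=B]) auto
  have ZNb: "\<exists>B. AE \<omega> in M. \<bar>Z j \<omega> * N k \<omega>\<bar> \<le> B" if jn: "j \<le> n" for j k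
  proof -
    obtain B where B: "AE \<omega> in M. Z j \<omega> \<le> B" using Zb[OF jn] by blast
    have "AE \<omega> in M. \<bar>Z j \<omega> * N k \<omega>\<bar> \<le> B"
      using B
    proof eventually_elim
      case (elim \<omega>)
      have "\<bar>Z j \<omega> * N k \<omega>\<bar> = Z j \<omega> * N k \<omega>" using Zpos N01 by simp
      also have "\<dots> \<le> Z j \<omega> * 1" using Zpos N01 by (intro mult_left_mono) auto
      finally show ?case using elim by simp
    qed
    then show ?thesis by blast
  qed
  have iZN: "integrable M (\<lambda>\<omega>. Z j \<omega> * N k \<omega>)" if jk: "j \<le> n" "k \<le> n" for j k
  proof -
    obtain B where B: "AE \<omega> in M. \<bar>Z j \<omega> * N k \<omega>\<bar> \<le> B" using ZNb[OF jk(1), of k] by blast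
    have "(\<lambda>\<omega>. Z j \<omega> * N k \<omega>) \<in> borel_measurable M"
      using ZM[OF jk(1)] NM[OF jk(2)] by measurable
    then show ?thesis using B bint by blast
  qed
  have iN: "integrable M (\<lambda>\<omega>. c * (1 - N k \<omega>))" if "k \<le> n" for k
  proof (rule bint[of _ "\<bar>c\<bar>"])
    show "(\<lambda>\<omega>. c * (1 - N k \<omega>)) \<in> borel_measurable M" using NM[OF that] by measurable
    have "\<bar>c * (1 - N k \<omega>)\<bar> \<le> \<bar>c\<bar>" for \<omega>
      using N01[of k \<omega>] by (simp add: abs_mult mult_left_le)
    then show "AE \<omega> in M. \<bar>c * (1 - N k \<omega>)\<bar> \<le> \<bar>c\<bar>" by simp
  qed
  have claim: "k \<le> n \<Longrightarrow> (\<integral>\<omega>. c * (1 - N k \<omega>) + Z k \<omega> * N k \<omega> \<partial>M) \<le> 1" for k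
  proof (induction k)
    case 0
    have "N 0 \<omega> = 1" for \<omega> unfolding N_def by auto
    then show ?case using Z0 by (simp add: prob_space)
  next
    case (Suc k)
    then have k: "k < n" "k \<le> n" by auto
    have "(\<integral>\<omega>. c * (1 - N (Suc k) \<omega>) + Z (Suc k) \<omega> * N (Suc k) \<omega> \<partial>M)
        \<le> (\<integral>\<omega>. c * (1 - N k \<omega>) + Z (Suc k) \<omega> * N k \<omega> \<partial>M)"
    proof (rule integral_mono)
      show "integrable M (\<lambda>\<omega>. c * (1 - N (Suc k) \<omega>) + Z (Suc k) \<omega> * N (Suc k) \<omega>)"
        using iN[OF Suc.prems] iZN[OF Suc.prems Suc.prems] by auto
      show "integrable M (\<lambda>\<omega>. c * (1 - N k \<omega>) + Z (Suc k) \<omega> * N k \<omega>)"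
        using iN[OF k(2)] iZN[OF Suc.prems k(2)] by auto
      fix \<omega>
      show "c * (1 - N (Suc k) \<omega>) + Z (Suc k) \<omega> * N (Suc k) \<omega> \<le> c * (1 - N k \<omega>) + Z (Suc k) \<omega> * N k \<omega>"
      proof (cases "\<forall>j\<in>{1..k}. Z j \<omega> < c")
        case True
        then show ?thesis
          by (cases "Z (Suc k) \<omega> < c") (auto simp: N_def le_Suc_eq)
      next
        case False
        then have "\<not> (\<forall>j\<in>{1..Suc k}. Z j \<omega> < c)" by auto
        have "N k \<omega> = 0" "N (Suc k) \<omega> = 0" using False \<open>\<not> (\<forall>j\<in>{1..Suc k}. Z j \<omega> < c)\<close> unfolding N_def by (simp_all only: if_False)
        then show ?thesis by simp
      qed
    qed
    also have "\<dots> = (\<integral>\<omega>. c * (1 - N k \<omega>) \<partial>M) + (\<integral>\<omega>. (Z k \<omega> * N k \<omega>) * D (Suc k) \<omega> \<partial>M)"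
    proof -
      have e: "(\<integral>\<omega>. Z (Suc k) \<omega> * N k \<omega> \<partial>M) = (\<integral>\<omega>. (Z k \<omega> * N k \<omega>) * D (Suc k) \<omega> \<partial>M)"
        by (simp add: ZD ac_simps)
      have "(\<integral>\<omega>. c * (1 - N k \<omega>) + Z (Suc k) \<omega> * N k \<omega> \<partial>M) = (\<integral>\<omega>. c * (1 - N k \<omega>) \<partial>M) + (\<integral>\<omega>. Z (Suc k) \<omega> * N k \<omega> \<partial>M)"
        by (rule Bochner_Integration.integral_add[OF iN[OF k(2)] iZN[OF Suc.prems k(2)]])
      then show ?thesis using e by simp
    qed
    also have "\<dots> \<le> (\<integral>\<omega>. c * (1 - N k \<omega>) \<partial>M) + (\<integral>\<omega>. Z k \<omega> * N k \<omega> \<partial>M)"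
    proof -
      obtain B where B: "AE \<omega> in M. \<bar>Z k \<omega> * N k \<omega>\<bar> \<le> B" using ZNb[OF k(2)] by blast
      have "(\<integral>\<omega>. (Z k \<omega> * N k \<omega>) * D (Suc k) \<omega> \<partial>M) \<le> (\<integral>\<omega>. Z k \<omega> * N k \<omega> \<partial>M)"
      proof (rule step[OF k(1), where C=B])
        show "(\<lambda>\<omega>. Z k \<omega> * N k \<omega>) \<in> borel_measurable (F k)"
          using Zm[OF order_refl k(2)] NF[OF k(2)] by measurable
        show "0 \<le> Z k \<omega> * N k \<omega>" for \<omega> using Zpos N01 by auto
        show "AE \<omega> in M. Z k \<omega> * N k \<omega> \<le> B" using B by eventually_elim auto
      qed
      then show ?thesis by simp
    qed
    also have "\<dots> = (\<integral>\<omega>. c * (1 - N k \<omega>) + Z k \<omega> * N k \<omega> \<partial>M)"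
      using iN[OF k(2)] iZN[OF k(2) k(2)] by (simp add: integral_add)
    also have "\<dots> \<le> 1" using Suc.IH k by simp
    finally show ?case .
  qed
  have "c * measure M {\<omega> \<in> space M. \<exists>j\<in>{1..n}. Z j \<omega> \<ge> c} = (\<integral>\<omega>. c * (1 - N n \<omega>) \<partial>M)"
  proof -
    have "measure M {\<omega> \<in> space M. \<exists>j\<in>{1..n}. Z j \<omega> \<ge> c}
        = (\<integral>\<omega>. indicator {\<omega> \<in> space M. \<exists>j\<in>{1..n}. Z j \<omega> \<ge> c} \<omega> \<partial>M)"
      by (simp add: Int_absorb2)
    also have "\<dots> = (\<integral>\<omega>. 1 - N n \<omega> \<partial>M)"
      by (rule Bochner_Integration.integral_cong) (auto simp: N_def indicator_def not_less)
    finally show ?thesis by simp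
  qed
  also have "\<dots> \<le> (\<integral>\<omega>. c * (1 - N n \<omega>) + Z n \<omega> * N n \<omega> \<partial>M)"
    using iN[of n] iZN[of n n] Zpos N01 by (intro integral_mono) auto
  also have "\<dots> \<le> 1" using claim by simp
  finally show ?thesis .
qed



lemma sq_le_powr: fixes t q :: real assumes "2 \<le> q" shows "t\<^sup>2 \<le> 1 + \<bar>t\<bar> powr q"
proof (cases "\<bar>t\<bar> \<le> 1")
  case True
  have "t\<^sup>2 = \<bar>t\<bar> * \<bar>t\<bar>" by (simp add: power2_eq_square abs_mult_self_eq)
  also have "\<dots> \<le> 1 * 1" using True by (intro mult_mono) auto
  finally show ?thesis using powr_ge_zero[of "\<bar>t\<bar>" q] by linarith
next
  case False
  have "t\<^sup>2 = \<bar>t\<bar> powr 2" by simp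
  also have "\<dots> \<le> \<bar>t\<bar> powr q" using False assms by (intro powr_mono) auto
  finally show ?thesis by simp
qed

theorem theorem2p3:
  fixes M :: "'a measure" and F :: "nat \<Rightarrow> 'a measure"
    and \<xi> :: "nat \<Rightarrow> 'a \<Rightarrow> real" and n :: nat and p \<delta> x v :: real
  assumes "prob_space M"
    and "n \<ge> 1"
    and F0: "sets (F 0) = {{}, space M}" and "space (F 0) = space M"
    and Fsub: "\<And>i. i \<le> n \<Longrightarrow> subalgebra M (F i)"
    and Fmono: "\<And>i j. i \<le> j \<Longrightarrow> j \<le> n \<Longrightarrow> subalgebra (F j) (F i)"
    and xi0: "\<And>\<omega>. \<xi> 0 \<omega> = 0"
    and adapted: "\<And>i. i \<le> n \<Longrightarrow> \<xi> i \<in> borel_measurable (F i)"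
    and integ: "\<And>i. i \<le> n \<Longrightarrow> integrable M (\<xi> i)"
    and mds: "\<And>i. 1 \<le> i \<Longrightarrow> i \<le> n \<Longrightarrow> AE \<omega> in M. real_cond_exp M (F (i - 1)) (\<xi> i) \<omega> = 0"
    and "p \<ge> 2" and "\<delta> > 0"
    and moment: "\<And>i. 1 \<le> i \<Longrightarrow> i \<le> n \<Longrightarrow> integrable M (\<lambda>\<omega>. \<bar>\<xi> i \<omega>\<bar> powr (p + \<delta>))"
    and "x > 0" and "v > 0"
  shows "measure M {\<omega> \<in> space M. \<exists>k\<in>{1..n}. mart_sum \<xi> k \<omega> \<ge> x \<and> cond_var_sum M F \<xi> k \<omega> \<le> v\<^sup>2}
    \<le> exp (- (x\<^sup>2 / (2 * (v\<^sup>2 + (1/3) * x powr ((2*p + \<delta>) / (p + \<delta>))))))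
       + (1 / x powr p) * (\<Sum>i=1..n. integral\<^sup>L M (\<lambda>\<omega>. \<bar>\<xi> i \<omega>\<bar> powr (p + \<delta>) * indicator {w. \<xi> i w > x powr (p / (p + \<delta>))} \<omega>))"
proof -
  interpret prob_space M by (rule assms(1))
  note pos = \<open>p \<ge> 2\<close> \<open>\<delta> > 0\<close> \<open>x > 0\<close> \<open>v > 0\<close>
  define y where "y = x powr (p / (p + \<delta>))"
  have y: "0 < y" unfolding y_def using pos by auto
  have xy: "x * y = x powr ((2*p + \<delta>) / (p + \<delta>))"
  proof -
    have "(2*p + \<delta>) / (p + \<delta>) = 1 + p / (p + \<delta>)" using pos by (simp add: field_simps)
    then show ?thesis unfolding y_def using pos by (simp add: powr_add)
  qed
  have ypow: "y powr (p + \<delta>) = x powr p"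
    unfolding y_def using pos by (simp add: powr_powr)
  define V where "V = v\<^sup>2 + x * y / 3"
  have V: "0 < V" unfolding V_def using pos y by (simp add: add_pos_nonneg)
  define l where "l = x / V"
  have l: "0 < l" unfolding l_def using V pos by simp
  have ly: "l * y < 3"
  proof -
    have "l * y = x * y / V" unfolding l_def by simp
    also have "\<dots> < 3" using V pos y unfolding V_def by (simp add: field_simps)
    finally show ?thesis .
  qed
  define gg where "gg = l\<^sup>2 / (2*(1 - l*y/3))"
  have gg: "0 \<le> gg" unfolding gg_def using ly by auto
  have lx: "l * x - gg * v\<^sup>2 = x\<^sup>2 / (2 * V)"
  proof -
    have h1: "1 - l*y/3 = v\<^sup>2 / V" unfolding l_def using V unfolding V_def by (simp add: field_simps)
    have "gg = x\<^sup>2 / (2 * V * v\<^sup>2)" unfolding gg_def h1 unfolding l_def using V pos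
      by (simp add: field_simps power2_eq_square)
    then show ?thesis unfolding l_def using V pos by (simp add: field_simps power2_eq_square)
  qed
  define Q where "Q i = real_cond_exp M (F (i - 1)) (\<lambda>w. (\<xi> i w)\<^sup>2)" for i
  define Z where "Z k \<omega> = exp (l * (\<Sum>i=1..k. min (\<xi> i \<omega>) y) - gg * (\<Sum>i=1..k. Q i \<omega>))" for k \<omega>
  define D where "D k \<omega> = exp (l * min (\<xi> k \<omega>) y - gg * Q k \<omega>)" for k \<omega>
  define c where "c = exp (l * x - gg * v\<^sup>2)"
  have cv: "cond_var_sum M F \<xi> k \<omega> = (\<Sum>i=1..k. Q i \<omega>)" for k \<omega>
    unfolding cond_var_sum_def Q_def by simp
  have sfs: "sigma_finite_subalgebra M (F i)" if "i \<le> n" for i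
    using Fsub[OF that]
    by (intro finite_measure_subalgebra_is_sigma_finite)
       (simp add: finite_measure_subalgebra_def finite_measure_subalgebra_axioms_def finite_measure_axioms)
  have xiF: "\<xi> i \<in> borel_measurable (F k)" if "i \<le> k" "k \<le> n" for i k
    using measurable_from_subalg[OF Fmono[OF that] adapted] that by auto
  have QF: "Q i \<in> borel_measurable (F k)" if "1 \<le> i" "i \<le> k" "k \<le> n" for i k
  proof -
    have q: "Q i \<in> borel_measurable (F (i - 1))" unfolding Q_def by simp
    have "i - 1 \<le> k" using that by auto
    from measurable_from_subalg[OF Fmono[OF this that(3)] q] show ?thesis .
  qed
  have xiM: "\<xi> i \<in> borel_measurable M" if "i \<le> n" for i
    using measurable_from_subalg[OF Fsub adapted] that by auto
  have xi2: "integrable M (\<lambda>w. (\<xi> i w)\<^sup>2)" if "1 \<le> i" "i \<le> n" for i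
  proof (rule Bochner_Integration.integrable_bound[where f="\<lambda>w. 1 + \<bar>\<xi> i w\<bar> powr (p + \<delta>)"])
    show "integrable M (\<lambda>w. 1 + \<bar>\<xi> i w\<bar> powr (p + \<delta>))" using moment[OF that] by auto
    show "(\<lambda>w. (\<xi> i w)\<^sup>2) \<in> borel_measurable M" using xiM[OF that(2)] by measurable
    have "\<bar>(\<xi> i w)\<^sup>2\<bar> \<le> \<bar>1 + \<bar>\<xi> i w\<bar> powr (p + \<delta>)\<bar>" for w
      using sq_le_powr[of "p + \<delta>" "\<xi> i w"] pos by simp
    then show "AE w in M. norm ((\<xi> i w)\<^sup>2) \<le> norm (1 + \<bar>\<xi> i w\<bar> powr (p + \<delta>))" by simp
  qed
  have Qpos: "AE \<omega> in M. 0 \<le> Q i \<omega>" if "1 \<le> i" "i \<le> n" for i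
    unfolding Q_def
    by (rule sigma_finite_subalgebra.real_cond_exp_pos[OF sfs]) (use that xiM in auto)
  have ZF: "Z j \<in> borel_measurable (F k)" if "j \<le> k" "k \<le> n" for j k
  proof -
    have s1: "(\<lambda>\<omega>. \<Sum>i=1..j. min (\<xi> i \<omega>) y) \<in> borel_measurable (F k)"
    proof (rule borel_measurable_sum)
      fix i assume "i \<in> {1..j}"
      then have [measurable]: "\<xi> i \<in> borel_measurable (F k)" using xiF that by auto
      show "(\<lambda>\<omega>. min (\<xi> i \<omega>) y) \<in> borel_measurable (F k)" by measurable
    qed
    have s2: "(\<lambda>\<omega>. \<Sum>i=1..j. Q i \<omega>) \<in> borel_measurable (F k)"
      by (rule borel_measurable_sum) (use QF that in auto)
    show ?thesis unfolding Z_def using s1 s2 by measurable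
  qed
  have ZM: "Z j \<in> borel_measurable M" if "j \<le> n" for j
    using measurable_from_subalg[OF Fsub ZF[OF order_refl]] that by auto
  have main: "c * measure M {\<omega> \<in> space M. \<exists>j\<in>{1..n}. Z j \<omega> \<ge> c} \<le> 1"
  proof (rule maximal_ineq[where F=F and D=D])
    show "prob_space M" by (rule assms(1))
    show "subalgebra M (F k)" if "k \<le> n" for k using Fsub that .
    show "Z j \<in> borel_measurable (F k)" if "j \<le> k" "k \<le> n" for j k using ZF that .
    show "Z 0 \<omega> = 1" for \<omega> unfolding Z_def by simp
    show "0 \<le> Z k \<omega>" for k \<omega> unfolding Z_def by simp
    show "\<exists>B. AE \<omega> in M. Z k \<omega> \<le> B" if "k \<le> n" for k
    proof -
      have "AE \<omega> in M. \<forall>i\<in>{1..k}. 0 \<le> Q i \<omega>"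
        by (rule AE_finite_allI) (use Qpos that in auto)
      then have "AE \<omega> in M. Z k \<omega> \<le> exp (l * (real k * y))"
      proof eventually_elim
        case (elim \<omega>)
        have "(\<Sum>i=1..k. min (\<xi> i \<omega>) y) \<le> (\<Sum>i=1..k. y)" by (intro sum_mono) auto
        then have a: "l * (\<Sum>i=1..k. min (\<xi> i \<omega>) y) \<le> l * (real k * y)" using l by (simp add: mult_left_mono)
        have "0 \<le> gg * (\<Sum>i=1..k. Q i \<omega>)" using elim gg by (intro mult_nonneg_nonneg sum_nonneg) auto
        then show ?case unfolding Z_def using a by simp
      qed
      then show ?thesis by blast
    qed
    show "Z (Suc k) \<omega> = Z k \<omega> * D (Suc k) \<omega>" for k \<omega>
      unfolding Z_def D_def by (simp add: exp_add[symmetric] algebra_simps)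
    show "(\<integral>\<omega>. Y \<omega> * D (Suc k) \<omega> \<partial>M) \<le> (\<integral>\<omega>. Y \<omega> \<partial>M)"
      if k: "k < n" and Ym: "Y \<in> borel_measurable (F k)" and Yp: "\<And>\<omega>. 0 \<le> Y \<omega>" and Yb: "AE \<omega> in M. Y \<omega> \<le> C"
      for k Y C
    proof -
      have "(\<integral>\<omega>. Y \<omega> * exp (l * min (\<xi> (Suc k) \<omega>) y - l\<^sup>2 / (2*(1 - l*y/3)) * real_cond_exp M (F k) (\<lambda>w. (\<xi> (Suc k) w)\<^sup>2) \<omega>) \<partial>M)
         \<le> (\<integral>\<omega>. Y \<omega> \<partial>M)"
        using assms(1) Fsub xiM xi2 integ mds[of "Suc k"] Ym Yp Yb l y ly k
        by (intro sup_step) auto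
      then show ?thesis unfolding D_def Q_def gg_def by simp
    qed
    show "0 < c" unfolding c_def by simp
  qed
  define H where "H = {\<omega> \<in> space M. \<exists>j\<in>{1..n}. Z j \<omega> \<ge> c}"
  define B where "B i = {\<omega> \<in> space M. y < \<xi> i \<omega>}" for i
  have HM: "H \<in> sets M"
  proof -
    have "H = (\<Union>j\<in>{1..n}. {\<omega> \<in> space M. c \<le> Z j \<omega>})" unfolding H_def by auto
    also have "\<dots> \<in> sets M"
    proof (rule sets.finite_UN)
      fix j assume "j \<in> {1..n}"
      then have [measurable]: "Z j \<in> borel_measurable M" using ZM by auto
      show "{\<omega> \<in> space M. c \<le> Z j \<omega>} \<in> sets M" by measurable
    qed simp
    finally show ?thesis .
  qed
  have BM: "B i \<in> sets M" if "i \<le> n" for i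
  proof -
    have [measurable]: "\<xi> i \<in> borel_measurable M" using xiM that .
    show ?thesis unfolding B_def by measurable
  qed
  have UBM: "(\<Union>i\<in>{1..n}. B i) \<in> sets M" by (rule sets.finite_UN) (use BM in auto)
  have Hb: "measure M H \<le> exp (- (x\<^sup>2 / (2 * V)))"
  proof -
    have "measure M H \<le> 1 / c" using main unfolding H_def c_def
      by (simp add: field_simps mult.commute)
    also have "1 / c = exp (- (x\<^sup>2 / (2 * V)))" unfolding c_def lx by (simp add: exp_minus')
    finally show ?thesis .
  qed
  have Bb: "measure M (B i) \<le> (1 / x powr p) * integral\<^sup>L M (\<lambda>\<omega>. \<bar>\<xi> i \<omega>\<bar> powr (p + \<delta>) * indicator {w. \<xi> i w > y} \<omega>)"
    if i: "1 \<le> i" "i \<le> n" for i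
  proof -
    have [measurable]: "\<xi> i \<in> borel_measurable M" using xiM i by auto
    have fm: "(\<lambda>\<omega>. \<bar>\<xi> i \<omega>\<bar> powr (p + \<delta>) * indicator {w. \<xi> i w > y} \<omega>) \<in> borel_measurable M"
      unfolding indicator_def by measurable
    have fi: "integrable M (\<lambda>\<omega>. \<bar>\<xi> i \<omega>\<bar> powr (p + \<delta>) * indicator {w. \<xi> i w > y} \<omega>)"
    proof (rule Bochner_Integration.integrable_bound[OF moment[OF i] fm])
      show "AE \<omega> in M. norm (\<bar>\<xi> i \<omega>\<bar> powr (p + \<delta>) * indicator {w. \<xi> i w > y} \<omega>) \<le> norm (\<bar>\<xi> i \<omega>\<bar> powr (p + \<delta>))"
        by (auto simp: indicator_def)
    qed
    have "x powr p * measure M (B i) = (\<integral>\<omega>. x powr p * indicator (B i) \<omega> \<partial>M)"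
      using BM[OF i(2)] by (simp add: Int_absorb2 sets.sets_into_space)
    also have "\<dots> \<le> integral\<^sup>L M (\<lambda>\<omega>. \<bar>\<xi> i \<omega>\<bar> powr (p + \<delta>) * indicator {w. \<xi> i w > y} \<omega>)"
    proof (rule integral_mono[OF _ fi])
      show "integrable M (\<lambda>\<omega>. x powr p * indicator (B i) \<omega>)" using BM[OF i(2)] by (intro integrable_mult_right integrable_real_indicator) (auto simp: less_top[symmetric])
      fix \<omega> assume "\<omega> \<in> space M"
      then show "x powr p * indicator (B i) \<omega> \<le> \<bar>\<xi> i \<omega>\<bar> powr (p + \<delta>) * indicator {w. \<xi> i w > y} \<omega>"
        using powr_mono2[of "p + \<delta>" y "\<bar>\<xi> i \<omega>\<bar>"] pos y ypow
        by (auto simp: B_def indicator_def)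
    qed
    finally show ?thesis using pos by (simp add: field_simps)
  qed
  have "measure M {\<omega> \<in> space M. \<exists>k\<in>{1..n}. mart_sum \<xi> k \<omega> \<ge> x \<and> cond_var_sum M F \<xi> k \<omega> \<le> v\<^sup>2}
      \<le> measure M (H \<union> (\<Union>i\<in>{1..n}. B i))"
  proof (rule finite_measure_mono)
    show "H \<union> (\<Union>i\<in>{1..n}. B i) \<in> sets M" using HM UBM by auto
    show "{\<omega> \<in> space M. \<exists>k\<in>{1..n}. mart_sum \<xi> k \<omega> \<ge> x \<and> cond_var_sum M F \<xi> k \<omega> \<le> v\<^sup>2}
      \<subseteq> H \<union> (\<Union>i\<in>{1..n}. B i)"
    proof
      fix \<omega> assume "\<omega> \<in> {\<omega> \<in> space M. \<exists>k\<in>{1..n}. mart_sum \<xi> k \<omega> \<ge> x \<and> cond_var_sum M F \<xi> k \<omega> \<le> v\<^sup>2}"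
      then obtain k where \<omega>: "\<omega> \<in> space M" and k: "k \<in> {1..n}" and S: "mart_sum \<xi> k \<omega> \<ge> x"
        and CV: "cond_var_sum M F \<xi> k \<omega> \<le> v\<^sup>2" by auto
      show "\<omega> \<in> H \<union> (\<Union>i\<in>{1..n}. B i)"
      proof (cases "\<exists>i\<in>{1..n}. y < \<xi> i \<omega>")
        case True then show ?thesis using \<omega> unfolding B_def by auto
      next
        case False
        have "(\<Sum>i=1..k. min (\<xi> i \<omega>) y) = (\<Sum>i=1..k. \<xi> i \<omega>)"
        proof (rule sum.cong)
          fix i assume "i \<in> {1..k}"
          then have "i \<in> {1..n}" using k by auto
          then have "\<xi> i \<omega> \<le> y" using False by (meson not_less)
          then show "min (\<xi> i \<omega>) y = \<xi> i \<omega>" by simp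
        qed simp
        then have "x \<le> (\<Sum>i=1..k. min (\<xi> i \<omega>) y)" using S unfolding mart_sum_def by simp
        then have a: "l * x \<le> l * (\<Sum>i=1..k. min (\<xi> i \<omega>) y)" using l by (simp add: mult_left_mono)
        have b: "gg * (\<Sum>i=1..k. Q i \<omega>) \<le> gg * v\<^sup>2" using CV gg unfolding cv by (simp add: mult_left_mono)
        have "c \<le> Z k \<omega>" unfolding c_def Z_def using a b by simp
        then show ?thesis unfolding H_def using \<omega> k by auto
      qed
    qed
  qed
  also have "\<dots> \<le> measure M H + measure M (\<Union>i\<in>{1..n}. B i)"
    using HM UBM by (intro measure_subadditive) auto
  also have "measure M (\<Union>i\<in>{1..n}. B i) \<le> (\<Sum>i=1..n. measure M (B i))"
    by (rule finite_measure_subadditive_finite) (use BM in auto)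
  also have "\<dots> \<le> (\<Sum>i=1..n. (1 / x powr p) * integral\<^sup>L M (\<lambda>\<omega>. \<bar>\<xi> i \<omega>\<bar> powr (p + \<delta>) * indicator {w. \<xi> i w > y} \<omega>))"
    by (rule sum_mono) (use Bb in auto)
  also have "\<dots> = (1 / x powr p) * (\<Sum>i=1..n. integral\<^sup>L M (\<lambda>\<omega>. \<bar>\<xi> i \<omega>\<bar> powr (p + \<delta>) * indicator {w. \<xi> i w > y} \<omega>))"
    by (simp add: sum_distrib_left)
  finally have fin: "measure M {\<omega> \<in> space M. \<exists>k\<in>{1..n}. mart_sum \<xi> k \<omega> \<ge> x \<and> cond_var_sum M F \<xi> k \<omega> \<le> v\<^sup>2}
    \<le> measure M H + (1 / x powr p) * (\<Sum>i=1..n. integral\<^sup>L M (\<lambda>\<omega>. \<bar>\<xi> i \<omega>\<bar> powr (p + \<delta>) * indicator {w. \<xi> i w > y} \<omega>))" by simp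
  have VV: "V = v\<^sup>2 + (1/3) * x powr ((2*p + \<delta>) / (p + \<delta>))" unfolding V_def xy[symmetric] by simp
  show ?thesis using fin Hb unfolding VV y_def by linarith
qed

end
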